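(* Let $\mathcal C$ be a Markov category that has conditionals and precise supports. Then the relation $\sim$ on states $I \leadsto X$ of $\mathrm{Obs}(\mathcal C)$ is a functorial equivalence relation. That is, it is an equivalence relation, and for all states $(K,\psi,o),(K',\psi',o') : I\leadsto X$ with $(K,\psi,o)\sim(K',\psi',o')$ and every morphism $(H,f,v):X\leadsto Y$ of $\mathrm{Obs}(\mathcal C)$ we have \[(H\otimes K,(f\otimes \mathrm{id}_K)\psi, v\otimes o)\ \sim\ (H\otimes K',(f\otimes\mathrm{id}_{K'})\psi', v\otimes o').\]
   Context: A Markov category is a symmetric monoidal category $(\mathcal C,\otimes,I)$ (assumed strict monoidal) in which every object $X$ carries a commutative comonoid $\mathrm{copy}_X:X\to X\otimes X$, $\mathrm{del}_X:X\to I$, compatible with $\otimes$ (i.e. $\mathrm{copy}_{X\otimes Y}$, $\mathrm{del}_{X\otimes Y}$ are obtained from those of $X$ and $Y$ using the symmetry), and in which $I$ is terminal. Write $gf$ for $g\circ f$. A morphism $f:X\to Y$ is deterministic if $\mathrm{copy}_Y f=(f\otimes f)\mathrm{copy}_X$. For $f:A\to X$, $g:A\to Y$ put $\langle f,g\rangle=(f\otimes g)\mathrm{copy}_A$. For $f:A\to X\otimes Y$ the marginals are $f_X=(\mathrm{id}_X\otimes\mathrm{del}_Y)f$ and $f_Y=(\mathrm{del}_X\otimes \mathrm{id}_Y)f$. A state is a morphism $I\to X$. A conditional of $f:A\to X\otimes Y$ with respect to $X$ is a morphism $f|_X:X\otimes A\to Y$ with $f=(\mathrm{id}_X\otimes f|_X)(\mathrm{copy}_X\otimes\mathrm{id}_A)(f_X\otimes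 \mathrm{id}_A)\mathrm{copy}_A$ (for a state $\psi:I\to X\otimes Y$: $\psi=\langle\mathrm{id}_X,\psi|_X\rangle\psi_X$); conditionals with respect to $Y$ are defined symmetrically; $\mathcal C$ has conditionals if all such conditionals exist. For a state $\mu:I\to X$ and $f,g:X\to Y$, write $f=_\mu g$ if $\langle\mathrm{id}_X,f\rangle\mu=\langle\mathrm{id}_X,g\rangle\mu$. For states $\mu,\nu:I\to X$, $\mu\ll\nu$ means: for all $Y$ and all $f,g:X\to Y$, $f=_\nu g$ implies $f=_\mu g$. $\mathcal C$ has precise supports if for all deterministic $x:I\to X$, $y:I\to Y$, all $f:X\to Y$ and all $\mu:I\to X$: $x\otimes y\ll\langle\mathrm{id}_X,f\rangle\mu$ iff ($x\ll\mu$ and $y\ll fx$). The category $\mathrm{Obs}(\mathcal C)$ has the objects of $\mathcal C$; a morphism $X\leadsto Y$ is a triple $(K,f,o)$ with $K$ an object, $f:X\to Y\otimes K$ in $\mathcal C$ and $o:I\to K$ deterministic; identities are $(I,\mathrm{id}_X,\mathrm{id}_I)$; composition is $(K',f',o')\bullet(K,f,o)=(K'\otimes K,(f'\otimes\mathrm{id}_K)f,o'\otimes o)$; the tensor of $(K,f,o):X\leadsto Y$ and $(K',f',o'):X'\leadsto Y'$ is $(K'\otimes K,(\mathrm{id}_{Y'}\otimes\mathrm{swap}_{K',Y}\otimes \mathrm{id}_K)(f'\otimes f),o'\otimes o)$ (order of factors as written). A state $(K,\psi,o):I\leadsto X$ (so $\psi:I\to X\otimes K$) is an inference problem; it succeeds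 if $o\ll\psi_K$, in which case its posterior is $\psi|_K\, o:I\to X$, where $\psi|_K:K\to X$ is a conditional of $\psi$ with respect to $K$. Define $(K,\psi,o)\sim(K',\psi',o')$ iff either ($o\ll\psi_K$, $o'\ll\psi'_{K'}$ and $\psi|_K o=\psi'|_{K'}o'$) or ($o\not\ll\psi_K$ and $o'\not\ll\psi'_{K'}$). *)

theory Defs
  imports Main
begin

text \<open>A (strict) symmetric monoidal category with explicit hom-sets, given as a
record of data; the axioms of a Markov category are collected in markov_cat.
cmp g f is the composite g after f.\<close>

record ('o, 'm) mcat =
  Ob  :: "'o set"
  Hom :: "'o \<Rightarrow> 'o \<Rightarrow> 'm set"
  cmp :: "'m \<Rightarrow> 'm \<Rightarrow> 'm"
  idm :: "'o \<Rightarrow> 'm"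
  tob :: "'o \<Rightarrow> 'o \<Rightarrow> 'o"
  tm  :: "'m \<Rightarrow> 'm \<Rightarrow> 'm"
  unt :: "'o"
  swp :: "'o \<Rightarrow> 'o \<Rightarrow> 'm"
  cpy :: "'o \<Rightarrow> 'm"
  dl  :: "'o \<Rightarrow> 'm"

definition category :: "('o,'m) mcat \<Rightarrow> bool" where
  "category C \<longleftrightarrow>
     (\<forall>A B f. f \<in> Hom C A B \<longrightarrow> A \<in> Ob C \<and> B \<in> Ob C) \<and>
     (\<forall>A B A' B' f. f \<in> Hom C A B \<longrightarrow> f \<in> Hom C A' B' \<longrightarrow> A = A' \<and> B = B') \<and>
     (\<forall>A\<in>Ob C. idm C A \<in> Hom C A A) \<and>
     (\<forall>A B D f g. f \<in> Hom C A B \<longrightarrow> g \<in> Hom C B D \<longrightarrow> cmp C g f \<in> Hom C A D) \<and>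
     (\<forall>A B D E f g h. f \<in> Hom C A B \<longrightarrow> g \<in> Hom C B D \<longrightarrow> h \<in> Hom C D E \<longrightarrow>
        cmp C h (cmp C g f) = cmp C (cmp C h g) f) \<and>
     (\<forall>A B f. f \<in> Hom C A B \<longrightarrow> cmp C (idm C B) f = f \<and> cmp C f (idm C A) = f)"

definition strict_monoidal :: "('o,'m) mcat \<Rightarrow> bool" where
  "strict_monoidal C \<longleftrightarrow>
     unt C \<in> Ob C \<and>
     (\<forall>A\<in>Ob C. \<forall>B\<in>Ob C. tob C A B \<in> Ob C) \<and>
     (\<forall>A B A' B' f g. f \<in> Hom C A B \<longrightarrow> g \<in> Hom C A' B' \<longrightarrow>
        tm C f g \<in> Hom C (tob C A A') (tob C B B')) \<and>
     (\<forall>A B D A' B' D' f g f' g'. f \<in> Hom C A B \<longrightarrow> g \<in> Hom C B D \<longrightarrow>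
        f' \<in> Hom C A' B' \<longrightarrow> g' \<in> Hom C B' D' \<longrightarrow>
        tm C (cmp C g f) (cmp C g' f') = cmp C (tm C g g') (tm C f f')) \<and>
     (\<forall>A\<in>Ob C. \<forall>B\<in>Ob C. tm C (idm C A) (idm C B) = idm C (tob C A B)) \<and>
     (\<forall>A\<in>Ob C. \<forall>B\<in>Ob C. \<forall>D\<in>Ob C. tob C (tob C A B) D = tob C A (tob C B D)) \<and>
     (\<forall>A B A' B' A'' B'' f g h. f \<in> Hom C A B \<longrightarrow> g \<in> Hom C A' B' \<longrightarrow> h \<in> Hom C A'' B'' \<longrightarrow>
        tm C (tm C f g) h = tm C f (tm C g h)) \<and>
     (\<forall>A\<in>Ob C. tob C (unt C) A = A \<and> tob C A (unt C) = A) \<and>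
     (\<forall>A B f. f \<in> Hom C A B \<longrightarrow> tm C (idm C (unt C)) f = f \<and> tm C f (idm C (unt C)) = f)"

definition symmetric :: "('o,'m) mcat \<Rightarrow> bool" where
  "symmetric C \<longleftrightarrow>
     (\<forall>A\<in>Ob C. \<forall>B\<in>Ob C. swp C A B \<in> Hom C (tob C A B) (tob C B A)) \<and>
     (\<forall>A B A' B' f g. f \<in> Hom C A B \<longrightarrow> g \<in> Hom C A' B' \<longrightarrow>
        cmp C (swp C B B') (tm C f g) = cmp C (tm C g f) (swp C A A')) \<and>
     (\<forall>A\<in>Ob C. \<forall>B\<in>Ob C. cmp C (swp C B A) (swp C A B) = idm C (tob C A B)) \<and>
     (\<forall>A\<in>Ob C. \<forall>B\<in>Ob C. \<forall>D\<in>Ob C.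
        swp C A (tob C B D) = cmp C (tm C (idm C B) (swp C A D)) (tm C (swp C A B) (idm C D)))"

definition markov_cat :: "('o,'m) mcat \<Rightarrow> bool" where
  "markov_cat C \<longleftrightarrow> category C \<and> strict_monoidal C \<and> symmetric C \<and>
     (\<forall>X\<in>Ob C. cpy C X \<in> Hom C X (tob C X X) \<and> dl C X \<in> Hom C X (unt C)) \<and>
     (\<forall>X\<in>Ob C. cmp C (tm C (dl C X) (idm C X)) (cpy C X) = idm C X \<and>
                cmp C (tm C (idm C X) (dl C X)) (cpy C X) = idm C X) \<and>
     (\<forall>X\<in>Ob C. cmp C (tm C (cpy C X) (idm C X)) (cpy C X) =
                cmp C (tm C (idm C X) (cpy C X)) (cpy C X)) \<and>
     (\<forall>X\<in>Ob C. cmp C (swp C X X) (cpy C X) = cpy C X) \<and>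
     (\<forall>X\<in>Ob C. \<forall>Y\<in>Ob C. cpy C (tob C X Y) =
        cmp C (tm C (tm C (idm C X) (swp C X Y)) (idm C Y)) (tm C (cpy C X) (cpy C Y))) \<and>
     (\<forall>X\<in>Ob C. \<forall>Y\<in>Ob C. dl C (tob C X Y) = tm C (dl C X) (dl C Y)) \<and>
     (\<forall>A f. f \<in> Hom C A (unt C) \<longrightarrow> f = dl C A)"

definition deterministic :: "('o,'m) mcat \<Rightarrow> 'o \<Rightarrow> 'o \<Rightarrow> 'm \<Rightarrow> bool" where
  "deterministic C X Y f \<longleftrightarrow> f \<in> Hom C X Y \<and>
     cmp C (cpy C Y) f = cmp C (tm C f f) (cpy C X)"

definition pair :: "('o,'m) mcat \<Rightarrow> 'o \<Rightarrow> 'm \<Rightarrow> 'm \<Rightarrow> 'm" where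
  "pair C A f g = cmp C (tm C f g) (cpy C A)"

definition margL :: "('o,'m) mcat \<Rightarrow> 'o \<Rightarrow> 'o \<Rightarrow> 'm \<Rightarrow> 'm" where
  "margL C X Y f = cmp C (tm C (idm C X) (dl C Y)) f"

definition margR :: "('o,'m) mcat \<Rightarrow> 'o \<Rightarrow> 'o \<Rightarrow> 'm \<Rightarrow> 'm" where
  "margR C X Y f = cmp C (tm C (dl C X) (idm C Y)) f"

text \<open>c is a conditional of f : A \<rightarrow> X \<otimes> Y with respect to X (c : X \<otimes> A \<rightarrow> Y).\<close>
definition is_condL :: "('o,'m) mcat \<Rightarrow> 'o \<Rightarrow> 'o \<Rightarrow> 'o \<Rightarrow> 'm \<Rightarrow> 'm \<Rightarrow> bool" where
  "is_condL C A X Y f c \<longleftrightarrow> c \<in> Hom C (tob C X A) Y \<and>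
     f = cmp C (tm C (idm C X) c)
           (cmp C (tm C (cpy C X) (idm C A))
             (cmp C (tm C (margL C X Y f) (idm C A)) (cpy C A)))"

definition is_condR :: "('o,'m) mcat \<Rightarrow> 'o \<Rightarrow> 'o \<Rightarrow> 'o \<Rightarrow> 'm \<Rightarrow> 'm \<Rightarrow> bool" where
  "is_condR C A X Y f c \<longleftrightarrow> is_condL C A Y X (cmp C (swp C X Y) f) c"

definition has_conditionals :: "('o,'m) mcat \<Rightarrow> bool" where
  "has_conditionals C \<longleftrightarrow>
     (\<forall>A\<in>Ob C. \<forall>X\<in>Ob C. \<forall>Y\<in>Ob C. \<forall>f\<in>Hom C A (tob C X Y).
        (\<exists>c. is_condL C A X Y f c) \<and> (\<exists>c. is_condR C A X Y f c))"

definition as_eq :: "('o,'m) mcat \<Rightarrow> 'o \<Rightarrow> 'm \<Rightarrow> 'm \<Rightarrow> 'm \<Rightarrow> bool" where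
  "as_eq C X \<mu> f g \<longleftrightarrow> cmp C (pair C X (idm C X) f) \<mu> = cmp C (pair C X (idm C X) g) \<mu>"

definition abs_cont :: "('o,'m) mcat \<Rightarrow> 'o \<Rightarrow> 'm \<Rightarrow> 'm \<Rightarrow> bool" where
  "abs_cont C X \<mu> \<nu> \<longleftrightarrow>
     (\<forall>Y\<in>Ob C. \<forall>f\<in>Hom C X Y. \<forall>g\<in>Hom C X Y. as_eq C X \<nu> f g \<longrightarrow> as_eq C X \<mu> f g)"

definition precise_supports :: "('o,'m) mcat \<Rightarrow> bool" where
  "precise_supports C \<longleftrightarrow>
     (\<forall>X\<in>Ob C. \<forall>Y\<in>Ob C. \<forall>x y f \<mu>.
        deterministic C (unt C) X x \<longrightarrow> deterministic C (unt C) Y y \<longrightarrow>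
        f \<in> Hom C X Y \<longrightarrow> \<mu> \<in> Hom C (unt C) X \<longrightarrow>
        (abs_cont C (tob C X Y) (tm C x y) (cmp C (pair C X (idm C X) f) \<mu>)
          \<longleftrightarrow> abs_cont C X x \<mu> \<and> abs_cont C Y y (cmp C f x)))"

definition obs_hom :: "('o,'m) mcat \<Rightarrow> 'o \<Rightarrow> 'o \<Rightarrow> ('o \<times> 'm \<times> 'm) set" where
  "obs_hom C X Y = {(K, f, ob). K \<in> Ob C \<and> f \<in> Hom C X (tob C Y K) \<and> deterministic C (unt C) K ob}"

definition obs_comp :: "('o,'m) mcat \<Rightarrow> 'o \<Rightarrow> 'o \<times> 'm \<times> 'm \<Rightarrow> 'o \<times> 'm \<times> 'm \<Rightarrow> 'o \<times> 'm \<times> 'm" where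
  "obs_comp C Y g h = (case g of (K', f', ob') \<Rightarrow> case h of (K, f, ob) \<Rightarrow>
       (tob C K' K, cmp C (tm C f' (idm C K)) f, tm C ob' ob))"

definition succeeds :: "('o,'m) mcat \<Rightarrow> 'o \<Rightarrow> 'o \<times> 'm \<times> 'm \<Rightarrow> bool" where
  "succeeds C X p = (case p of (K, \<psi>, ob) \<Rightarrow> abs_cont C K ob (margR C X K \<psi>))"

text \<open>The relation \<sim>; the posterior \<psi>|_K o is formed with (any) conditional
\<psi>|_K : K \<rightarrow> X of \<psi> with respect to K.\<close>
definition obs_sim :: "('o,'m) mcat \<Rightarrow> 'o \<Rightarrow> 'o \<times> 'm \<times> 'm \<Rightarrow> 'o \<times> 'm \<times> 'm \<Rightarrow> bool" where
  "obs_sim C X p q = (case p of (K, \<psi>, ob) \<Rightarrow> case q of (K', \<psi>', ob') \<Rightarrow>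
     (succeeds C X p \<and> succeeds C X q \<and>
        (\<forall>c c'. is_condR C (unt C) X K \<psi> c \<longrightarrow> is_condR C (unt C) X K' \<psi>' c' \<longrightarrow>
             cmp C c ob = cmp C c' ob'))
     \<or> (\<not> succeeds C X p \<and> \<not> succeeds C X q))"

end

theory Submission
  imports Defs
begin


locale MC =
  fixes C :: "('o,'m) mcat"
  assumes mc: "markov_cat C"
begin

abbreviation Cm (infixr "\<cdot>" 55) where "g \<cdot> f \<equiv> cmp C g f"
abbreviation Tm (infixr "\<otimes>" 60) where "f \<otimes> g \<equiv> tm C f g"
abbreviation To (infixr "\<odot>" 60) where "A \<odot> B \<equiv> tob C A B"
abbreviation U where "U \<equiv> unt C"
abbreviation ID where "ID A \<equiv> idm C A"
abbreviation SW where "SW A B \<equiv> swp C A B"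
abbreviation CP where "CP A \<equiv> cpy C A"
abbreviation DL where "DL A \<equiv> dl C A"
abbreviation HM where "HM A B \<equiv> Hom C A B"
abbreviation OB where "OB \<equiv> Ob C"

lemma cat: "category C" and smon: "strict_monoidal C" and sym: "symmetric C"
  using mc unfolding markov_cat_def by auto

lemma homD: "f \<in> HM A B \<Longrightarrow> A \<in> OB \<and> B \<in> OB"
  using cat[unfolded category_def, THEN conjunct1] by blast
lemma homD1: "f \<in> HM A B \<Longrightarrow> A \<in> OB" using homD by blast
lemma homD2: "f \<in> HM A B \<Longrightarrow> B \<in> OB" using homD by blast

lemma T_id[intro]: "A \<in> OB \<Longrightarrow> ID A \<in> HM A A"
  using cat[unfolded category_def, THEN conjunct2, THEN conjunct2, THEN conjunct1] by blast
lemma T_cmp[intro]: "f \<in> HM A B \<Longrightarrow> g \<in> HM B D \<Longrightarrow> g \<cdot> f \<in> HM A D"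
  using cat[unfolded category_def, THEN conjunct2, THEN conjunct2, THEN conjunct2, THEN conjunct1] by blast
lemma assoc: "f \<in> HM A B \<Longrightarrow> g \<in> HM B D \<Longrightarrow> h \<in> HM D E \<Longrightarrow> h \<cdot> (g \<cdot> f) = (h \<cdot> g) \<cdot> f"
  using cat[unfolded category_def, THEN conjunct2, THEN conjunct2, THEN conjunct2, THEN conjunct2, THEN conjunct1] by blast
lemma idL: "f \<in> HM A B \<Longrightarrow> ID B \<cdot> f = f"
  using cat[unfolded category_def, THEN conjunct2, THEN conjunct2, THEN conjunct2, THEN conjunct2, THEN conjunct2] by blast
lemma idR: "f \<in> HM A B \<Longrightarrow> f \<cdot> ID A = f"
  using cat[unfolded category_def, THEN conjunct2, THEN conjunct2, THEN conjunct2, THEN conjunct2, THEN conjunct2] by blast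

lemma O_U[intro,simp]: "U \<in> OB" using smon[unfolded strict_monoidal_def, THEN conjunct1] by blast
lemma O_t[intro,simp]: "A \<in> OB \<Longrightarrow> B \<in> OB \<Longrightarrow> A \<odot> B \<in> OB" using smon[unfolded strict_monoidal_def, THEN conjunct2, THEN conjunct1] by blast
lemma T_tm[intro]: "f \<in> HM A B \<Longrightarrow> g \<in> HM A' B' \<Longrightarrow> f \<otimes> g \<in> HM (A \<odot> A') (B \<odot> B')"
  using smon[unfolded strict_monoidal_def, THEN conjunct2, THEN conjunct2, THEN conjunct1] by blast
lemma inter: "f \<in> HM A B \<Longrightarrow> g \<in> HM B D \<Longrightarrow> f' \<in> HM A' B' \<Longrightarrow> g' \<in> HM B' D' \<Longrightarrow>
   (g \<cdot> f) \<otimes> (g' \<cdot> f') = (g \<otimes> g') \<cdot> (f \<otimes> f')"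
  using smon[unfolded strict_monoidal_def, THEN conjunct2, THEN conjunct2, THEN conjunct2, THEN conjunct1] by blast
lemma tid: "A \<in> OB \<Longrightarrow> B \<in> OB \<Longrightarrow> ID A \<otimes> ID B = ID (A \<odot> B)"
  using smon[unfolded strict_monoidal_def, THEN conjunct2, THEN conjunct2, THEN conjunct2, THEN conjunct2, THEN conjunct1] by blast
lemma oassoc[simp]: "A \<in> OB \<Longrightarrow> B \<in> OB \<Longrightarrow> D \<in> OB \<Longrightarrow> (A \<odot> B) \<odot> D = A \<odot> (B \<odot> D)"
  using smon[unfolded strict_monoidal_def, THEN conjunct2, THEN conjunct2, THEN conjunct2, THEN conjunct2, THEN conjunct2, THEN conjunct1] by blast
lemma tassoc: "f \<in> HM A B \<Longrightarrow> g \<in> HM A' B' \<Longrightarrow> h \<in> HM A'' B'' \<Longrightarrow> (f \<otimes> g) \<otimes> h = f \<otimes> (g \<otimes> h)"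
  using smon[unfolded strict_monoidal_def, THEN conjunct2, THEN conjunct2, THEN conjunct2, THEN conjunct2, THEN conjunct2, THEN conjunct2, THEN conjunct1] by blast
lemma ounit[simp]: "A \<in> OB \<Longrightarrow> U \<odot> A = A" "A \<in> OB \<Longrightarrow> A \<odot> U = A"
  using smon[unfolded strict_monoidal_def, THEN conjunct2, THEN conjunct2, THEN conjunct2, THEN conjunct2, THEN conjunct2, THEN conjunct2, THEN conjunct2, THEN conjunct1] by blast+
lemma tunitL: "f \<in> HM A B \<Longrightarrow> ID U \<otimes> f = f"
  using smon[unfolded strict_monoidal_def, THEN conjunct2, THEN conjunct2, THEN conjunct2, THEN conjunct2, THEN conjunct2, THEN conjunct2, THEN conjunct2, THEN conjunct2] by blast
lemma tunitR: "f \<in> HM A B \<Longrightarrow> f \<otimes> ID U = f"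
  using smon[unfolded strict_monoidal_def, THEN conjunct2, THEN conjunct2, THEN conjunct2, THEN conjunct2, THEN conjunct2, THEN conjunct2, THEN conjunct2, THEN conjunct2] by blast

lemma T_sw[intro]: "A \<in> OB \<Longrightarrow> B \<in> OB \<Longrightarrow> SW A B \<in> HM (A \<odot> B) (B \<odot> A)"
  using sym[unfolded symmetric_def, THEN conjunct1] by blast
lemma swnat: "f \<in> HM A B \<Longrightarrow> g \<in> HM A' B' \<Longrightarrow> SW B B' \<cdot> (f \<otimes> g) = (g \<otimes> f) \<cdot> SW A A'"
  using sym[unfolded symmetric_def, THEN conjunct2, THEN conjunct1] by blast
lemma swinv: "A \<in> OB \<Longrightarrow> B \<in> OB \<Longrightarrow> SW B A \<cdot> SW A B = ID (A \<odot> B)"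
  using sym[unfolded symmetric_def, THEN conjunct2, THEN conjunct2, THEN conjunct1] by blast
lemma hex1: "A \<in> OB \<Longrightarrow> B \<in> OB \<Longrightarrow> D \<in> OB \<Longrightarrow> SW A (B \<odot> D) = (ID B \<otimes> SW A D) \<cdot> (SW A B \<otimes> ID D)"
  using sym[unfolded symmetric_def, THEN conjunct2, THEN conjunct2, THEN conjunct2] by blast

lemma T_cp[intro]: "A \<in> OB \<Longrightarrow> CP A \<in> HM A (A \<odot> A)"
  using mc[unfolded markov_cat_def, THEN conjunct2, THEN conjunct2, THEN conjunct2, THEN conjunct1] by blast
lemma T_dl[intro]: "A \<in> OB \<Longrightarrow> DL A \<in> HM A U"
  using mc[unfolded markov_cat_def, THEN conjunct2, THEN conjunct2, THEN conjunct2, THEN conjunct1] by blast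
lemma counitL: "X \<in> OB \<Longrightarrow> (DL X \<otimes> ID X) \<cdot> CP X = ID X"
  using mc[unfolded markov_cat_def, THEN conjunct2, THEN conjunct2, THEN conjunct2, THEN conjunct2, THEN conjunct1] by blast
lemma counitR: "X \<in> OB \<Longrightarrow> (ID X \<otimes> DL X) \<cdot> CP X = ID X"
  using mc[unfolded markov_cat_def, THEN conjunct2, THEN conjunct2, THEN conjunct2, THEN conjunct2, THEN conjunct1] by blast
lemma coassoc: "X \<in> OB \<Longrightarrow> (CP X \<otimes> ID X) \<cdot> CP X = (ID X \<otimes> CP X) \<cdot> CP X"
  using mc[unfolded markov_cat_def, THEN conjunct2, THEN conjunct2, THEN conjunct2, THEN conjunct2, THEN conjunct2, THEN conjunct1] by blast
lemma cocomm: "X \<in> OB \<Longrightarrow> SW X X \<cdot> CP X = CP X"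
  using mc[unfolded markov_cat_def, THEN conjunct2, THEN conjunct2, THEN conjunct2, THEN conjunct2, THEN conjunct2, THEN conjunct2, THEN conjunct1] by blast
lemma cptensor: "X \<in> OB \<Longrightarrow> Y \<in> OB \<Longrightarrow> CP (X \<odot> Y) = ((ID X \<otimes> SW X Y) \<otimes> ID Y) \<cdot> (CP X \<otimes> CP Y)"
  using mc[unfolded markov_cat_def, THEN conjunct2, THEN conjunct2, THEN conjunct2, THEN conjunct2, THEN conjunct2, THEN conjunct2, THEN conjunct2, THEN conjunct1] by blast
lemma dltensor: "X \<in> OB \<Longrightarrow> Y \<in> OB \<Longrightarrow> DL (X \<odot> Y) = DL X \<otimes> DL Y"
  using mc[unfolded markov_cat_def, THEN conjunct2, THEN conjunct2, THEN conjunct2, THEN conjunct2, THEN conjunct2, THEN conjunct2, THEN conjunct2, THEN conjunct2, THEN conjunct1] by blast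
lemma termin: "f \<in> HM A U \<Longrightarrow> f = DL A"
  using mc[unfolded markov_cat_def, THEN conjunct2, THEN conjunct2, THEN conjunct2, THEN conjunct2, THEN conjunct2, THEN conjunct2, THEN conjunct2, THEN conjunct2, THEN conjunct2] by blast

end

context MC begin

lemmas TY = T_id T_cmp T_tm T_sw T_cp T_dl O_t O_U


lemma interL: "f \<in> HM A B \<Longrightarrow> g \<in> HM B D \<Longrightarrow> X \<in> OB \<Longrightarrow> (g \<cdot> f) \<otimes> ID X = (g \<otimes> ID X) \<cdot> (f \<otimes> ID X)"
  using inter[of f A B g D "ID X" X X "ID X" X] idL[OF T_id[of X]] T_id[of X] by simp
lemma interR: "f \<in> HM A B \<Longrightarrow> g \<in> HM B D \<Longrightarrow> X \<in> OB \<Longrightarrow> ID X \<otimes> (g \<cdot> f) = (ID X \<otimes> g) \<cdot> (ID X \<otimes> f)"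
  using inter[of "ID X" X X "ID X" X f A B g D] idL[OF T_id[of X]] T_id[of X] by simp
lemma slide1: "f \<in> HM A B \<Longrightarrow> g \<in> HM A' B' \<Longrightarrow> f \<otimes> g = (f \<otimes> ID B') \<cdot> (ID A \<otimes> g)"
  using inter[of "ID A" A A f B "g" A' B' "ID B'" B'] idR[of f A B] idL[of g A' B'] homD[of f A B] homD[of g A' B'] T_id[of A] T_id[of B'] by simp
lemma slide2: "f \<in> HM A B \<Longrightarrow> g \<in> HM A' B' \<Longrightarrow> f \<otimes> g = (ID B \<otimes> g) \<cdot> (f \<otimes> ID A')"
  using inter[of f A B "ID B" B "ID A'" A' A' g B'] idR[of g A' B'] idL[of f A B] homD[of f A B] homD[of g A' B'] T_id[of A'] T_id[of B] by simp
lemma stateL: "f \<in> HM U B \<Longrightarrow> g \<in> HM U B' \<Longrightarrow> f \<otimes> g = (ID B \<otimes> g) \<cdot> f"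
  using slide2[of f U B g U B'] tunitR[of f] by simp
lemma stateR: "f \<in> HM U B \<Longrightarrow> g \<in> HM U B' \<Longrightarrow> f \<otimes> g = (f \<otimes> ID B') \<cdot> g"
  using slide1[of f U B g U B'] tunitL[of g] by simp

lemma swUR: "A \<in> OB \<Longrightarrow> SW A U = ID A"
proof -
  assume A: "A \<in> OB"
  have h: "SW A U = SW A U \<cdot> SW A U"
    using hex1[OF A O_U O_U] tunitL[OF T_sw[OF A O_U]] tunitR[OF T_sw[OF A O_U]] by (simp add: A)
  have i: "SW U A \<cdot> SW A U = ID A" using swinv[OF A O_U] A by simp
  have t: "SW A U \<in> HM A A" using T_sw[OF A O_U] A by simp
  have t2: "SW U A \<in> HM A A" using T_sw[OF O_U A] A by simp
  have "SW A U = (SW U A \<cdot> SW A U) \<cdot> SW A U" using i t idL by simp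
  also have "\<dots> = SW U A \<cdot> SW A U" using assoc[OF t t t2] h by simp
  finally show ?thesis using i by simp
qed
lemma swUL: "A \<in> OB \<Longrightarrow> SW U A = ID A"
proof -
  assume A: "A \<in> OB"
  have "SW U A \<cdot> SW A U = ID A" using swinv[OF A O_U] A by simp
  moreover have "SW U A \<in> HM A A" using T_sw[OF O_U A] A by simp
  ultimately show ?thesis using swUR[OF A] idR by simp
qed

end

context MC begin

lemma homU: "f \<in> HM A B \<Longrightarrow> f \<in> HM A' B' \<Longrightarrow> A = A' \<and> B = B'"
  using cat[unfolded category_def, THEN conjunct2, THEN conjunct1] by blast

definition wt where "wt f \<longleftrightarrow> (\<exists>A B. f \<in> HM A B)"
definition dom where "dom f = (THE A. \<exists>B. f \<in> HM A B)"
definition cod where "cod f = (THE B. \<exists>A. f \<in> HM A B)"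

lemma hom_dc: assumes "f \<in> HM A B" shows "wt f" "dom f = A" "cod f = B"
proof -
  show "wt f" using assms wt_def by blast
  show "dom f = A" unfolding dom_def using assms homU by blast
  show "cod f = B" unfolding cod_def using assms homU by blast
qed

lemma wt_hom: "wt f \<Longrightarrow> f \<in> HM (dom f) (cod f)"
  using hom_dc wt_def by metis

lemma wt_dob[simp]: "wt f \<Longrightarrow> dom f \<in> OB" using wt_hom homD by blast
lemma wt_cob[simp]: "wt f \<Longrightarrow> cod f \<in> OB" using wt_hom homD by blast

lemma wt_id[simp]: "A \<in> OB \<Longrightarrow> wt (ID A)" and dom_id[simp]: "A \<in> OB \<Longrightarrow> dom (ID A) = A"
  and cod_id[simp]: "A \<in> OB \<Longrightarrow> cod (ID A) = A"
  using hom_dc[OF T_id] by auto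

lemma cmp_hom: "wt f \<Longrightarrow> wt g \<Longrightarrow> cod f = dom g \<Longrightarrow> g \<cdot> f \<in> HM (dom f) (cod g)"
proof -
  assume a: "wt f" "wt g" "cod f = dom g"
  have "f \<in> HM (dom f) (cod f)" "g \<in> HM (cod f) (cod g)" using wt_hom a by metis+
  then show ?thesis by (rule T_cmp)
qed
lemma wt_cmp[simp]: "wt f \<Longrightarrow> wt g \<Longrightarrow> cod f = dom g \<Longrightarrow> wt (g \<cdot> f)"
  and dom_cmp[simp]: "wt f \<Longrightarrow> wt g \<Longrightarrow> cod f = dom g \<Longrightarrow> dom (g \<cdot> f) = dom f"
  and cod_cmp[simp]: "wt f \<Longrightarrow> wt g \<Longrightarrow> cod f = dom g \<Longrightarrow> cod (g \<cdot> f) = cod g"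
  using hom_dc[OF cmp_hom] by metis+

lemma wt_tm[simp]: "wt f \<Longrightarrow> wt g \<Longrightarrow> wt (f \<otimes> g)"
  and dom_tm[simp]: "wt f \<Longrightarrow> wt g \<Longrightarrow> dom (f \<otimes> g) = dom f \<odot> dom g"
  and cod_tm[simp]: "wt f \<Longrightarrow> wt g \<Longrightarrow> cod (f \<otimes> g) = cod f \<odot> cod g"
  using hom_dc[OF T_tm[OF wt_hom wt_hom]] by metis+

lemma wt_sw[simp]: "A \<in> OB \<Longrightarrow> B \<in> OB \<Longrightarrow> wt (SW A B)"
  and dom_sw[simp]: "A \<in> OB \<Longrightarrow> B \<in> OB \<Longrightarrow> dom (SW A B) = A \<odot> B"
  and cod_sw[simp]: "A \<in> OB \<Longrightarrow> B \<in> OB \<Longrightarrow> cod (SW A B) = B \<odot> A"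
  using hom_dc[OF T_sw] by auto

lemma wt_cp[simp]: "A \<in> OB \<Longrightarrow> wt (CP A)"
  and dom_cp[simp]: "A \<in> OB \<Longrightarrow> dom (CP A) = A"
  and cod_cp[simp]: "A \<in> OB \<Longrightarrow> cod (CP A) = A \<odot> A"
  using hom_dc[OF T_cp] by auto

lemma wt_dl[simp]: "A \<in> OB \<Longrightarrow> wt (DL A)"
  and dom_dl[simp]: "A \<in> OB \<Longrightarrow> dom (DL A) = A"
  and cod_dl[simp]: "A \<in> OB \<Longrightarrow> cod (DL A) = U"
  using hom_dc[OF T_dl] by auto

lemma cassoc[simp]: "wt f \<Longrightarrow> wt g \<Longrightarrow> wt h \<Longrightarrow> cod f = dom g \<Longrightarrow> cod g = dom h \<Longrightarrow>
   (h \<cdot> g) \<cdot> f = h \<cdot> (g \<cdot> f)"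
proof -
  assume a: "wt f" "wt g" "wt h" "cod f = dom g" "cod g = dom h"
  have "f \<in> HM (dom f) (cod f)" "g \<in> HM (cod f) (cod g)" "h \<in> HM (cod g) (cod h)" using wt_hom a by metis+
  then show ?thesis using assoc by metis
qed
lemma tassoc'[simp]: "wt f \<Longrightarrow> wt g \<Longrightarrow> wt h \<Longrightarrow> (f \<otimes> g) \<otimes> h = f \<otimes> (g \<otimes> h)"
  using tassoc[OF wt_hom wt_hom wt_hom] by metis
lemma idL'[simp]: "wt f \<Longrightarrow> B = cod f \<Longrightarrow> ID B \<cdot> f = f"
  using idL[OF wt_hom] by metis
lemma idR'[simp]: "wt f \<Longrightarrow> A = dom f \<Longrightarrow> f \<cdot> ID A = f"
  using idR[OF wt_hom] by metis
lemma tunitL'[simp]: "wt f \<Longrightarrow> ID U \<otimes> f = f" using tunitL[OF wt_hom] by metis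
lemma tunitR'[simp]: "wt f \<Longrightarrow> f \<otimes> ID U = f" using tunitR[OF wt_hom] by metis

lemma inter': "wt f \<Longrightarrow> wt g \<Longrightarrow> wt f' \<Longrightarrow> wt g' \<Longrightarrow> cod f = dom g \<Longrightarrow> cod f' = dom g' \<Longrightarrow>
   (g \<cdot> f) \<otimes> (g' \<cdot> f') = (g \<otimes> g') \<cdot> (f \<otimes> f')"
proof -
  assume a: "wt f" "wt g" "wt f'" "wt g'" "cod f = dom g" "cod f' = dom g'"
  have "f \<in> HM (dom f) (cod f)" "g \<in> HM (cod f) (cod g)" "f' \<in> HM (dom f') (cod f')" "g' \<in> HM (cod f') (cod g')" using wt_hom a by metis+
  then show ?thesis using inter by metis
qed

lemma swnat': "wt f \<Longrightarrow> wt g \<Longrightarrow> B = cod f \<Longrightarrow> B' = cod g \<Longrightarrow>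
   SW B B' \<cdot> (f \<otimes> g) = (g \<otimes> f) \<cdot> SW (dom f) (dom g)"
  using swnat[OF wt_hom wt_hom] by metis

lemma test: assumes "f \<in> HM A B" "g \<in> HM B D" "h \<in> HM D E" "k \<in> HM E F"
  shows "(k \<cdot> h) \<cdot> (g \<cdot> f) = k \<cdot> ((h \<cdot> g) \<cdot> f)"
  using hom_dc[OF assms(1)] hom_dc[OF assms(2)] hom_dc[OF assms(3)] hom_dc[OF assms(4)] by simp

end

context MC begin

lemma tid'[simp]: "A \<in> OB \<Longrightarrow> B \<in> OB \<Longrightarrow> ID A \<otimes> ID B = ID (A \<odot> B)" by (rule tid)
lemma tidctx[simp]: "A \<in> OB \<Longrightarrow> B \<in> OB \<Longrightarrow> wt f \<Longrightarrow> ID A \<otimes> (ID B \<otimes> f) = ID (A \<odot> B) \<otimes> f"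
  by (metis tassoc' tid wt_id)

lemma ctx: "a \<cdot> b = c \<Longrightarrow> wt a \<Longrightarrow> wt b \<Longrightarrow> wt k \<Longrightarrow> cod b = dom a \<Longrightarrow> cod k = dom b \<Longrightarrow> a \<cdot> (b \<cdot> k) = c \<cdot> k"
  by (metis cassoc)

lemma merge: "wt f \<Longrightarrow> wt g \<Longrightarrow> wt f' \<Longrightarrow> wt g' \<Longrightarrow> cod f = dom g \<Longrightarrow> cod f' = dom g' \<Longrightarrow>
   (g \<otimes> g') \<cdot> (f \<otimes> f') = (g \<cdot> f) \<otimes> (g' \<cdot> f')"
  by (simp add: inter')
lemma merge_ctx: "wt f \<Longrightarrow> wt g \<Longrightarrow> wt f' \<Longrightarrow> wt g' \<Longrightarrow> cod f = dom g \<Longrightarrow> cod f' = dom g' \<Longrightarrow>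
   wt k \<Longrightarrow> cod k = dom f \<odot> dom f' \<Longrightarrow>
   (g \<otimes> g') \<cdot> ((f \<otimes> f') \<cdot> k) = ((g \<cdot> f) \<otimes> (g' \<cdot> f')) \<cdot> k"
  by (simp add: inter' del: cassoc) (metis cassoc wt_tm dom_tm cod_tm)

lemma swinv'[simp]: "A \<in> OB \<Longrightarrow> B \<in> OB \<Longrightarrow> SW B A \<cdot> SW A B = ID (A \<odot> B)" by (rule swinv)
lemma swinv_ctx[simp]: "A \<in> OB \<Longrightarrow> B \<in> OB \<Longrightarrow> wt k \<Longrightarrow> cod k = A \<odot> B \<Longrightarrow> SW B A \<cdot> (SW A B \<cdot> k) = k"
  by (simp add: ctx[OF swinv])

lemma idU: "ID U = DL U" by (rule termin) (rule T_id, rule O_U)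
lemma cpU[simp]: "CP U = ID U"
proof -
  have "CP U \<in> HM U U" using T_cp[OF O_U] by simp
  then show ?thesis using idU termin by metis
qed
lemma dlU[simp]: "DL U = ID U" using idU by simp
declare swUR[simp] swUL[simp]

lemma hex2: assumes A: "A \<in> OB" and B: "B \<in> OB" and D: "D \<in> OB"
  shows "SW (A \<odot> B) D = (SW A D \<otimes> ID B) \<cdot> (ID A \<otimes> SW B D)"
proof -
  let ?R = "(SW A D \<otimes> ID B) \<cdot> (ID A \<otimes> SW B D)"
  have "?R \<cdot> SW D (A \<odot> B) = ?R \<cdot> (ID A \<otimes> SW D B) \<cdot> (SW D A \<otimes> ID B)"
    by (simp add: hex1 A B D)
  also have "\<dots> = (SW A D \<otimes> ID B) \<cdot> ((ID A \<otimes> SW B D) \<cdot> (ID A \<otimes> SW D B)) \<cdot> (SW D A \<otimes> ID B)"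
    using A B D by simp
  also have "\<dots> = (SW A D \<otimes> ID B) \<cdot> (SW D A \<otimes> ID B)"
    using A B D by (simp add: merge)
  also have "\<dots> = ID (D \<odot> A \<odot> B)"
    using A B D by (simp add: merge)
  finally have e: "?R \<cdot> SW D (A \<odot> B) = ID (D \<odot> A \<odot> B)" .
  have "SW (A \<odot> B) D = (?R \<cdot> SW D (A \<odot> B)) \<cdot> SW (A \<odot> B) D"
    using e A B D by simp
  also have "\<dots> = ?R" using A B D by simp
  finally show ?thesis .
qed

end

context MC begin

lemma splitR: "wt f \<Longrightarrow> wt g \<Longrightarrow> cod f = dom g \<Longrightarrow> X \<in> OB \<Longrightarrow> ID X \<otimes> (g \<cdot> f) = (ID X \<otimes> g) \<cdot> (ID X \<otimes> f)"
  using inter'[of "ID X" "ID X" f g] by simp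
lemma splitL: "wt f \<Longrightarrow> wt g \<Longrightarrow> cod f = dom g \<Longrightarrow> X \<in> OB \<Longrightarrow> (g \<cdot> f) \<otimes> ID X = (g \<otimes> ID X) \<cdot> (f \<otimes> ID X)"
  using inter'[of f g "ID X" "ID X"] by simp

lemma cpt: "X \<in> OB \<Longrightarrow> Y \<in> OB \<Longrightarrow> CP (X \<odot> Y) = (ID X \<otimes> SW X Y \<otimes> ID Y) \<cdot> (CP X \<otimes> CP Y)"
  using cptensor by simp

lemma swdet: assumes A: "A \<in> OB" and B: "B \<in> OB"
  shows "CP (B \<odot> A) \<cdot> SW A B = (SW A B \<otimes> SW A B) \<cdot> CP (A \<odot> B)"
proof -
  have "CP (B \<odot> A) \<cdot> SW A B = (ID B \<otimes> SW B A \<otimes> ID A) \<cdot> (CP B \<otimes> CP A) \<cdot> SW A B"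
    using A B by (simp add: cpt)
  also have "\<dots> = (ID B \<otimes> SW B A \<otimes> ID A) \<cdot> SW (A \<odot> A) (B \<odot> B) \<cdot> (CP A \<otimes> CP B)"
    using A B swnat'[of "CP A" "CP B" "A \<odot> A" "B \<odot> B"] by simp
  also have "\<dots> = (ID B \<otimes> SW B A \<otimes> ID A) \<cdot> (ID B \<otimes> ((SW A B \<otimes> ID A) \<cdot> (ID A \<otimes> SW A B))) \<cdot>
        (((SW A B \<otimes> ID A) \<cdot> (ID A \<otimes> SW A B)) \<otimes> ID B) \<cdot> (CP A \<otimes> CP B)"
    using A B by (simp add: hex1 hex2)
  also have "\<dots> = (ID B \<otimes> SW B A \<otimes> ID A) \<cdot> (ID B \<otimes> SW A B \<otimes> ID A) \<cdot> (ID B \<otimes> ID A \<otimes> SW A B) \<cdot>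
        (SW A B \<otimes> ID A \<otimes> ID B) \<cdot> (ID A \<otimes> SW A B \<otimes> ID B) \<cdot> (CP A \<otimes> CP B)"
    using A B by (simp add: splitR splitL)
  also have "\<dots> = (ID (B \<odot> A) \<otimes> SW A B) \<cdot> (SW A B \<otimes> ID (A \<odot> B)) \<cdot> (ID A \<otimes> SW A B \<otimes> ID B) \<cdot> (CP A \<otimes> CP B)"
    using A B by (simp add: merge_ctx merge)
  also have "\<dots> = (SW A B \<otimes> SW A B) \<cdot> (ID A \<otimes> SW A B \<otimes> ID B) \<cdot> (CP A \<otimes> CP B)"
    using A B by (simp add: merge_ctx merge)
  also have "\<dots> = (SW A B \<otimes> SW A B) \<cdot> CP (A \<odot> B)"
    using A B by (simp add: cpt)
  finally show ?thesis .
qed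

end

context MC begin

lemma homI: "wt f \<Longrightarrow> dom f = A \<Longrightarrow> cod f = B \<Longrightarrow> f \<in> HM A B"
  using wt_hom by blast

lemma cocomm'[simp]: "X \<in> OB \<Longrightarrow> SW X X \<cdot> CP X = CP X" by (rule cocomm)
lemma cocomm_ctx[simp]: "X \<in> OB \<Longrightarrow> wt k \<Longrightarrow> cod k = X \<Longrightarrow> SW X X \<cdot> (CP X \<cdot> k) = CP X \<cdot> k"
  by (simp add: ctx[OF cocomm])

lemma margswap: assumes X: "X \<in> OB" and K: "K \<in> OB"
  shows "(ID K \<otimes> DL X) \<cdot> SW X K = DL X \<otimes> ID K"
  using swnat'[of "DL X" "ID K" U K] X K by simp

lemma margswap_ctx: "X \<in> OB \<Longrightarrow> K \<in> OB \<Longrightarrow> wt k \<Longrightarrow> cod k = X \<odot> K \<Longrightarrow>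
   (ID K \<otimes> DL X) \<cdot> (SW X K \<cdot> k) = (DL X \<otimes> ID K) \<cdot> k"
  by (simp add: ctx[OF margswap])

lemma condR_param: assumes A: "A \<in> OB" and Y: "Y \<in> OB" and H: "H \<in> OB" and r: "r \<in> HM A (Y \<odot> H)"
  shows "is_condR C A Y H r e \<longleftrightarrow> e \<in> HM (H \<odot> A) Y \<and>
     SW Y H \<cdot> r = (ID H \<otimes> e) \<cdot> (CP H \<otimes> ID A) \<cdot> ((margR C Y H r) \<otimes> ID A) \<cdot> CP A"
proof -
  have "margL C H Y (SW Y H \<cdot> r) = margR C Y H r"
    unfolding margL_def margR_def using hom_dc[OF r] A Y H by (simp add: margswap_ctx)
  then show ?thesis unfolding is_condR_def is_condL_def by simp
qed

lemma condR_state: assumes X: "X \<in> OB" and K: "K \<in> OB" and p: "p \<in> HM U (X \<odot> K)"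
  shows "is_condR C U X K p c \<longleftrightarrow> c \<in> HM K X \<and>
     SW X K \<cdot> p = pair C K (ID K) c \<cdot> margR C X K p"
proof -
  have m: "margR C X K p \<in> HM U K" unfolding margR_def using hom_dc[OF p] X K by (intro homI) simp_all
  have "is_condR C U X K p c \<longleftrightarrow> c \<in> HM K X \<and>
     SW X K \<cdot> p = (ID K \<otimes> c) \<cdot> (CP K \<otimes> ID U) \<cdot> ((margR C X K p) \<otimes> ID U) \<cdot> CP U"
    using condR_param[OF O_U X K p] K by simp
  also have "\<dots> \<longleftrightarrow> c \<in> HM K X \<and> SW X K \<cdot> p = pair C K (ID K) c \<cdot> margR C X K p"
  proof (cases "c \<in> HM K X")
    case True
    then show ?thesis unfolding pair_def using hom_dc[OF True] hom_dc[OF m] K X by simp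
  qed simp
  finally show ?thesis .
qed

lemma marg_pair: assumes K: "K \<in> OB" and c: "c \<in> HM K X"
  shows "(DL K \<otimes> ID X) \<cdot> pair C K (ID K) c = c"
proof -
  have X: "X \<in> OB" using c homD by blast
  have "(DL K \<otimes> ID X) \<cdot> pair C K (ID K) c = (DL K \<otimes> c) \<cdot> CP K"
    unfolding pair_def using hom_dc[OF c] K X by (simp add: merge_ctx)
  also have "\<dots> = c \<cdot> (DL K \<otimes> ID K) \<cdot> CP K"
    using inter'[of "DL K" "ID U" "ID K" c] hom_dc[OF c] K X by simp
  also have "\<dots> = c" using counitL[OF K] hom_dc[OF c] K by simp
  finally show ?thesis .
qed

lemma uniq: assumes X: "X \<in> OB" and K: "K \<in> OB" and p: "p \<in> HM U (X \<odot> K)"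
  and c: "is_condR C U X K p c" and c': "is_condR C U X K p c'"
  and ac: "abs_cont C K ob (margR C X K p)" and ob: "ob \<in> HM U K"
  shows "c \<cdot> ob = c' \<cdot> ob"
proof -
  have ct: "c \<in> HM K X" and ce: "SW X K \<cdot> p = pair C K (ID K) c \<cdot> margR C X K p"
    using c condR_state[OF X K p] by auto
  have ct': "c' \<in> HM K X" and ce': "SW X K \<cdot> p = pair C K (ID K) c' \<cdot> margR C X K p"
    using c' condR_state[OF X K p] by auto
  have "as_eq C K (margR C X K p) c c'" unfolding as_eq_def using ce ce' by simp
  then have "as_eq C K ob c c'" using ac X ct ct' unfolding abs_cont_def by blast
  then have e: "pair C K (ID K) c \<cdot> ob = pair C K (ID K) c' \<cdot> ob" unfolding as_eq_def .
  have pt: "pair C K (ID K) c \<in> HM K (K \<odot> X)" "pair C K (ID K) c' \<in> HM K (K \<odot> X)"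
    unfolding pair_def using hom_dc[OF ct] hom_dc[OF ct'] K X by (intro homI; simp)+
  have "c \<cdot> ob = ((DL K \<otimes> ID X) \<cdot> pair C K (ID K) c) \<cdot> ob" using marg_pair[OF K ct] by simp
  also have "\<dots> = (DL K \<otimes> ID X) \<cdot> (pair C K (ID K) c \<cdot> ob)"
    using hom_dc[OF pt(1)] hom_dc[OF ob] K X by simp
  also have "\<dots> = (DL K \<otimes> ID X) \<cdot> (pair C K (ID K) c' \<cdot> ob)" using e by simp
  also have "\<dots> = ((DL K \<otimes> ID X) \<cdot> pair C K (ID K) c') \<cdot> ob"
    using hom_dc[OF pt(2)] hom_dc[OF ob] K X by simp
  also have "\<dots> = c' \<cdot> ob" using marg_pair[OF K ct'] by simp
  finally show ?thesis .
qed

end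

context MC begin

lemma pair_s: assumes s: "s \<in> HM A B" and det: "CP B \<cdot> s = (s \<otimes> s) \<cdot> CP A"
  and xi: "xi \<in> HM U A" and F: "F \<in> HM B Z"
  shows "pair C B (ID B) F \<cdot> (s \<cdot> xi) = (s \<otimes> ID Z) \<cdot> (pair C A (ID A) (F \<cdot> s) \<cdot> xi)"
proof -
  note h = hom_dc[OF s] hom_dc[OF xi] hom_dc[OF F]
  have A: "A \<in> OB" and B: "B \<in> OB" and Z: "Z \<in> OB" using s F homD by auto
  have d: "CP B \<cdot> (s \<cdot> xi) = (s \<otimes> s) \<cdot> (CP A \<cdot> xi)"
    using ctx[OF det] h A B by simp
  show ?thesis unfolding pair_def using h A B Z d by (simp add: merge_ctx)
qed

lemma transport: assumes s: "s \<in> HM A B" and det: "CP B \<cdot> s = (s \<otimes> s) \<cdot> CP A"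
  and t: "t \<in> HM B A" and ts: "t \<cdot> s = ID A"
  and x: "x \<in> HM U A" and y: "y \<in> HM U A" and ac: "abs_cont C A x y"
  shows "abs_cont C B (s \<cdot> x) (s \<cdot> y)"
  unfolding abs_cont_def
proof (intro ballI impI)
  fix Z F G assume Z: "Z \<in> OB" and F: "F \<in> HM B Z" and G: "G \<in> HM B Z"
    and e: "as_eq C B (s \<cdot> y) F G"
  have A: "A \<in> OB" and B: "B \<in> OB" using s homD by auto
  have Fs: "F \<cdot> s \<in> HM A Z" and Gs: "G \<cdot> s \<in> HM A Z" using F G s by auto
  have pF: "pair C A (ID A) (F \<cdot> s) \<cdot> y \<in> HM U (A \<odot> Z)" and pG: "pair C A (ID A) (G \<cdot> s) \<cdot> y \<in> HM U (A \<odot> Z)"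
    unfolding pair_def using hom_dc[OF Fs] hom_dc[OF Gs] hom_dc[OF y] A Z by (intro homI; simp)+
  have "(s \<otimes> ID Z) \<cdot> (pair C A (ID A) (F \<cdot> s) \<cdot> y) = (s \<otimes> ID Z) \<cdot> (pair C A (ID A) (G \<cdot> s) \<cdot> y)"
    using e unfolding as_eq_def using pair_s[OF s det y F] pair_s[OF s det y G] by simp
  then have "(t \<otimes> ID Z) \<cdot> ((s \<otimes> ID Z) \<cdot> (pair C A (ID A) (F \<cdot> s) \<cdot> y)) = (t \<otimes> ID Z) \<cdot> ((s \<otimes> ID Z) \<cdot> (pair C A (ID A) (G \<cdot> s) \<cdot> y))"
    by simp
  moreover have "\<And>P. P \<in> HM U (A \<odot> Z) \<Longrightarrow> (t \<otimes> ID Z) \<cdot> ((s \<otimes> ID Z) \<cdot> P) = P"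
  proof -
    fix P assume P: "P \<in> HM U (A \<odot> Z)"
    have "(t \<otimes> ID Z) \<cdot> ((s \<otimes> ID Z) \<cdot> P) = ((t \<cdot> s) \<otimes> ID Z) \<cdot> P"
      using merge_ctx[of s t "ID Z" "ID Z" P] hom_dc[OF s] hom_dc[OF t] hom_dc[OF P] Z A by simp
    then show "(t \<otimes> ID Z) \<cdot> ((s \<otimes> ID Z) \<cdot> P) = P" using ts hom_dc[OF P] A Z by simp
  qed
  ultimately have "as_eq C A y (F \<cdot> s) (G \<cdot> s)" unfolding as_eq_def using pF pG by metis
  then have "as_eq C A x (F \<cdot> s) (G \<cdot> s)" using ac Z Fs Gs unfolding abs_cont_def by blast
  then show "as_eq C B (s \<cdot> x) F G"
    unfolding as_eq_def using pair_s[OF s det x F] pair_s[OF s det x G] by simp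
qed

lemma transport_sw: assumes A: "A \<in> OB" and B: "B \<in> OB"
  and x: "x \<in> HM U (A \<odot> B)" and y: "y \<in> HM U (A \<odot> B)"
  shows "abs_cont C (B \<odot> A) (SW A B \<cdot> x) (SW A B \<cdot> y) \<longleftrightarrow> abs_cont C (A \<odot> B) x y"
proof
  show "abs_cont C (A \<odot> B) x y \<Longrightarrow> abs_cont C (B \<odot> A) (SW A B \<cdot> x) (SW A B \<cdot> y)"
    by (rule transport[OF T_sw[OF A B] swdet[OF A B] T_sw[OF B A] swinv[OF A B] x y])
  assume a: "abs_cont C (B \<odot> A) (SW A B \<cdot> x) (SW A B \<cdot> y)"
  have x': "SW A B \<cdot> x \<in> HM U (B \<odot> A)" and y': "SW A B \<cdot> y \<in> HM U (B \<odot> A)" using x y A B by auto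
  have "abs_cont C (A \<odot> B) (SW B A \<cdot> (SW A B \<cdot> x)) (SW B A \<cdot> (SW A B \<cdot> y))"
    by (rule transport[OF T_sw[OF B A] swdet[OF B A] T_sw[OF A B] swinv[OF B A] x' y' a])
  then show "abs_cont C (A \<odot> B) x y" using hom_dc[OF x] hom_dc[OF y] A B by simp
qed

end

context MC begin

lemma state_from_cond: assumes X: "X \<in> OB" and K: "K \<in> OB" and p: "p \<in> HM U (X \<odot> K)"
  and c: "is_condR C U X K p c"
  shows "p = (c \<otimes> ID K) \<cdot> (CP K \<cdot> margR C X K p)" and "c \<in> HM K X" and "margR C X K p \<in> HM U K"
proof -
  have ct: "c \<in> HM K X" and ce: "SW X K \<cdot> p = pair C K (ID K) c \<cdot> margR C X K p"
    using c condR_state[OF X K p] by auto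
  have m: "margR C X K p \<in> HM U K" unfolding margR_def using hom_dc[OF p] X K by (intro homI) simp_all
  note h = hom_dc[OF p] hom_dc[OF ct] hom_dc[OF m]
  have "p = SW K X \<cdot> (SW X K \<cdot> p)" using h X K by simp
  also have "\<dots> = SW K X \<cdot> ((ID K \<otimes> c) \<cdot> (CP K \<cdot> margR C X K p))" using ce h X K unfolding pair_def by simp
  also have "\<dots> = (c \<otimes> ID K) \<cdot> (SW K K \<cdot> (CP K \<cdot> margR C X K p))"
    using ctx[OF swnat'[of "ID K" c K X]] h X K by simp
  also have "\<dots> = (c \<otimes> ID K) \<cdot> (CP K \<cdot> margR C X K p)" using h X K by simp
  finally show "p = (c \<otimes> ID K) \<cdot> (CP K \<cdot> margR C X K p)" .
  show "c \<in> HM K X" "margR C X K p \<in> HM U K" using ct m by auto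
qed

lemma marg_tensor: assumes g: "wt g" "cod g = Y \<odot> H" and Y: "Y \<in> OB" and H: "H \<in> OB" and K: "K \<in> OB"
  shows "(DL Y \<otimes> ID (H \<odot> K)) \<cdot> (g \<otimes> ID K) = ((DL Y \<otimes> ID H) \<cdot> g) \<otimes> ID K"
proof -
  have "DL Y \<otimes> ID (H \<odot> K) = (DL Y \<otimes> ID H) \<otimes> ID K" using Y H K by simp
  then have "(DL Y \<otimes> ID (H \<odot> K)) \<cdot> (g \<otimes> ID K) = ((DL Y \<otimes> ID H) \<otimes> ID K) \<cdot> (g \<otimes> ID K)" by simp
  also have "\<dots> = ((DL Y \<otimes> ID H) \<cdot> g) \<otimes> (ID K \<cdot> ID K)"
    by (rule merge) (use g Y H K in simp_all)
  finally show ?thesis using K by simp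
qed

lemma comp_marg: assumes X: "X \<in> OB" and Y: "Y \<in> OB" and H: "H \<in> OB" and K: "K \<in> OB"
  and p: "p \<in> HM U (X \<odot> K)" and f: "f \<in> HM X (Y \<odot> H)" and c: "is_condR C U X K p c"
  shows "(f \<otimes> ID K) \<cdot> p = ((f \<cdot> c) \<otimes> ID K) \<cdot> (CP K \<cdot> margR C X K p)"
    and "margR C Y (H \<odot> K) ((f \<otimes> ID K) \<cdot> p) = (margR C Y H (f \<cdot> c) \<otimes> ID K) \<cdot> (CP K \<cdot> margR C X K p)"
    and "SW H K \<cdot> margR C Y (H \<odot> K) ((f \<otimes> ID K) \<cdot> p) = pair C K (ID K) (margR C Y H (f \<cdot> c)) \<cdot> margR C X K p"
proof -
  note sc = state_from_cond[OF X K p c]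
  note h = hom_dc[OF p] hom_dc[OF sc(2)] hom_dc[OF sc(3)] hom_dc[OF f]
  show e1: "(f \<otimes> ID K) \<cdot> p = ((f \<cdot> c) \<otimes> ID K) \<cdot> (CP K \<cdot> margR C X K p)"
    apply (subst sc(1))
    using merge_ctx[of c f "ID K" "ID K" "CP K \<cdot> margR C X K p"] h X Y H K by simp
  have e2: "margR C Y (H \<odot> K) ((f \<otimes> ID K) \<cdot> p) = (DL Y \<otimes> ID (H \<odot> K)) \<cdot> ((f \<cdot> c) \<otimes> ID K) \<cdot> (CP K \<cdot> margR C X K p)"
    unfolding margR_def[of C Y "H \<odot> K"] using e1 by simp
  also have "\<dots> = (((DL Y \<otimes> ID H) \<cdot> (f \<cdot> c)) \<otimes> ID K) \<cdot> (CP K \<cdot> margR C X K p)"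
    using ctx[OF marg_tensor[of "f \<cdot> c" Y H K]] h X Y H K by simp
  finally show e3: "margR C Y (H \<odot> K) ((f \<otimes> ID K) \<cdot> p) = (margR C Y H (f \<cdot> c) \<otimes> ID K) \<cdot> (CP K \<cdot> margR C X K p)"
    unfolding margR_def[of C Y "H \<odot> K"] margR_def[of C Y H] .
  have mt: "margR C Y H (f \<cdot> c) \<in> HM K H" unfolding margR_def using h X Y H K by (intro homI) simp_all
  note h2 = hom_dc[OF mt]
  show "SW H K \<cdot> margR C Y (H \<odot> K) ((f \<otimes> ID K) \<cdot> p) = pair C K (ID K) (margR C Y H (f \<cdot> c)) \<cdot> margR C X K p"
    unfolding e3 pair_def using ctx[OF swnat'[of "margR C Y H (f \<cdot> c)" "ID K" H K]] h h2 H K by simp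
qed

end

context MC begin

lemma coassoc_ctx: "X \<in> OB \<Longrightarrow> wt k \<Longrightarrow> cod k = X \<Longrightarrow> (CP X \<otimes> ID X) \<cdot> (CP X \<cdot> k) = (ID X \<otimes> CP X) \<cdot> (CP X \<cdot> k)"
  using ctx[OF coassoc] by simp

lemma comp_cond: assumes X: "X \<in> OB" and Y: "Y \<in> OB" and H: "H \<in> OB" and K: "K \<in> OB"
  and p: "p \<in> HM U (X \<odot> K)" and f: "f \<in> HM X (Y \<odot> H)" and c: "is_condR C U X K p c"
  and e: "is_condR C K Y H (f \<cdot> c) e"
  shows "is_condR C U Y (H \<odot> K) ((f \<otimes> ID K) \<cdot> p) e"
proof -
  note sc = state_from_cond[OF X K p c]
  note cm = comp_marg[OF X Y H K p f c]
  have rt: "f \<cdot> c \<in> HM K (Y \<odot> H)" using sc f by auto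
  have et: "e \<in> HM (H \<odot> K) Y" and hyp: "SW Y H \<cdot> (f \<cdot> c) = (ID H \<otimes> e) \<cdot> (CP H \<otimes> ID K) \<cdot> ((margR C Y H (f \<cdot> c)) \<otimes> ID K) \<cdot> CP K"
    using e condR_param[OF K Y H rt] by auto
  have mt: "margR C Y H (f \<cdot> c) \<in> HM K H" unfolding margR_def using hom_dc[OF rt] Y H by (intro homI) simp_all
  have Pt: "(f \<otimes> ID K) \<cdot> p \<in> HM U (Y \<odot> H \<odot> K)" using hom_dc[OF f] hom_dc[OF p] X Y H K by (intro homI) simp_all
  define r where "r = f \<cdot> c"
  define rH where "rH = margR C Y H (f \<cdot> c)"
  define m where "m = margR C X K p"
  note h = hom_dc[OF rt[folded r_def]] hom_dc[OF mt[folded rH_def]] hom_dc[OF sc(3)[folded m_def]] hom_dc[OF et]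
  note hyp' = hyp[folded r_def rH_def]
  have "SW Y (H \<odot> K) \<cdot> ((r \<otimes> ID K) \<cdot> (CP K \<cdot> m))
      = (ID H \<otimes> SW Y K) \<cdot> ((SW Y H \<otimes> ID K) \<cdot> ((r \<otimes> ID K) \<cdot> (CP K \<cdot> m)))"
    using h Y H K by (simp add: hex1)
  also have "\<dots> = (ID H \<otimes> SW Y K) \<cdot> (((SW Y H \<cdot> r) \<otimes> ID K) \<cdot> (CP K \<cdot> m))"
    using h Y H K by (simp add: merge_ctx)
  also have "\<dots> = (ID H \<otimes> SW Y K) \<cdot> ((((ID H \<otimes> e) \<cdot> ((CP H \<otimes> ID K) \<cdot> ((rH \<otimes> ID K) \<cdot> CP K))) \<otimes> ID K) \<cdot> (CP K \<cdot> m))"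
    using hyp' by simp
  also have "\<dots> = (ID H \<otimes> SW Y K) \<cdot> ((ID H \<otimes> e \<otimes> ID K) \<cdot> ((CP H \<otimes> ID (K \<odot> K)) \<cdot> ((rH \<otimes> ID (K \<odot> K)) \<cdot> ((CP K \<otimes> ID K) \<cdot> (CP K \<cdot> m)))))"
    using h Y H K by (simp add: splitL)
  also have "\<dots> = (ID H \<otimes> SW Y K) \<cdot> ((ID H \<otimes> e \<otimes> ID K) \<cdot> ((CP H \<otimes> ID (K \<odot> K)) \<cdot> ((rH \<otimes> ID (K \<odot> K)) \<cdot> ((ID K \<otimes> CP K) \<cdot> (CP K \<cdot> m)))))"
    using h Y H K by (simp add: coassoc_ctx)
  also have "\<dots> = (ID H \<otimes> (SW Y K \<cdot> (e \<otimes> ID K))) \<cdot> (((CP H \<cdot> rH) \<otimes> CP K) \<cdot> (CP K \<cdot> m))"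
    using h Y H K by (simp add: merge_ctx merge)
  also have "\<dots> = (ID H \<otimes> ((ID K \<otimes> e) \<cdot> SW (H \<odot> K) K)) \<cdot> (((CP H \<cdot> rH) \<otimes> CP K) \<cdot> (CP K \<cdot> m))"
    using swnat'[of e "ID K" Y K] h Y H K by simp
  also have "\<dots> = (ID H \<otimes> ((ID K \<otimes> e) \<cdot> ((SW H K \<otimes> ID K) \<cdot> (ID H \<otimes> SW K K)))) \<cdot> (((CP H \<cdot> rH) \<otimes> CP K) \<cdot> (CP K \<cdot> m))"
    using h Y H K by (simp add: hex2)
  also have "\<dots> = (ID (H \<odot> K) \<otimes> e) \<cdot> ((ID H \<otimes> SW H K \<otimes> ID K) \<cdot> ((ID (H \<odot> H) \<otimes> SW K K) \<cdot> (((CP H \<cdot> rH) \<otimes> CP K) \<cdot> (CP K \<cdot> m))))"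
    using h Y H K by (simp add: splitR)
  also have "\<dots> = (ID (H \<odot> K) \<otimes> e) \<cdot> ((ID H \<otimes> SW H K \<otimes> ID K) \<cdot> (((CP H \<cdot> rH) \<otimes> CP K) \<cdot> (CP K \<cdot> m)))"
    using h Y H K by (simp add: merge_ctx)
  also have "\<dots> = (ID (H \<odot> K) \<otimes> e) \<cdot> ((ID H \<otimes> SW H K \<otimes> ID K) \<cdot> ((CP H \<otimes> CP K) \<cdot> ((rH \<otimes> ID K) \<cdot> (CP K \<cdot> m))))"
    using h Y H K by (simp add: merge_ctx)
  also have "\<dots> = pair C (H \<odot> K) (ID (H \<odot> K)) e \<cdot> ((rH \<otimes> ID K) \<cdot> (CP K \<cdot> m))"
    unfolding pair_def using h Y H K by (simp add: cpt)
  finally have main: "SW Y (H \<odot> K) \<cdot> ((r \<otimes> ID K) \<cdot> (CP K \<cdot> m)) = pair C (H \<odot> K) (ID (H \<odot> K)) e \<cdot> ((rH \<otimes> ID K) \<cdot> (CP K \<cdot> m))" .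
  show ?thesis
    unfolding condR_state[OF Y O_t[OF H K] Pt]
    using et main cm(1)[folded r_def m_def] cm(2)[folded r_def rH_def m_def] unfolding r_def rH_def m_def by simp
qed

end

context MC begin

lemma idsplit: assumes "H \<in> OB" "H' \<in> OB" "wt g" "wt e" "dom e = H' \<odot> cod g"
  shows "(ID H \<otimes> e) \<cdot> (ID (H \<odot> H') \<otimes> g) = ID H \<otimes> (e \<cdot> (ID H' \<otimes> g))"
proof -
  have "(ID H \<otimes> e) \<cdot> (ID H \<otimes> (ID H' \<otimes> g)) = (ID H \<cdot> ID H) \<otimes> (e \<cdot> (ID H' \<otimes> g))"
    by (rule merge) (use assms in simp_all)
  then show ?thesis using assms by simp
qed

lemma det_state: "deterministic C U K ob \<Longrightarrow> ob \<in> HM U K \<and> CP K \<cdot> ob = ob \<otimes> ob"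
  unfolding deterministic_def using hom_dc[of ob U K] by auto

lemma cond_at: assumes Y: "Y \<in> OB" and H: "H \<in> OB" and K: "K \<in> OB"
  and rt: "r \<in> HM K (Y \<odot> H)" and e: "is_condR C K Y H r e"
  and ob: "ob \<in> HM U K" and dob: "CP K \<cdot> ob = ob \<otimes> ob"
  shows "is_condR C U Y H (r \<cdot> ob) (e \<cdot> (ID H \<otimes> ob))"
proof -
  have et: "e \<in> HM (H \<odot> K) Y" and hyp: "SW Y H \<cdot> r = (ID H \<otimes> e) \<cdot> (CP H \<otimes> ID K) \<cdot> ((margR C Y H r) \<otimes> ID K) \<cdot> CP K"
    using e condR_param[OF K Y H rt] by auto
  have mt: "margR C Y H r \<in> HM K H" unfolding margR_def using hom_dc[OF rt] Y H by (intro homI) simp_all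
  have rot: "r \<cdot> ob \<in> HM U (Y \<odot> H)" using rt ob by auto
  define rH where "rH = margR C Y H r"
  note h = hom_dc[OF rt] hom_dc[OF mt[folded rH_def]] hom_dc[OF et] hom_dc[OF ob]
  have m2: "margR C Y H (r \<cdot> ob) = rH \<cdot> ob" unfolding rH_def margR_def using h Y H by simp
  have "SW Y H \<cdot> (r \<cdot> ob) = (ID H \<otimes> e) \<cdot> ((CP H \<otimes> ID K) \<cdot> ((rH \<otimes> ID K) \<cdot> (CP K \<cdot> ob)))"
    using ctx[OF hyp[folded rH_def]] h Y H K by simp
  also have "\<dots> = (ID H \<otimes> e) \<cdot> ((CP H \<otimes> ID K) \<cdot> ((rH \<otimes> ID K) \<cdot> ((ID K \<otimes> ob) \<cdot> ob)))"
    using dob stateL[OF ob ob] by simp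
  also have "\<dots> = (ID H \<otimes> e) \<cdot> ((CP H \<otimes> ID K) \<cdot> ((ID H \<otimes> ob) \<cdot> (rH \<cdot> ob)))"
  proof -
    have s2: "rH \<otimes> ob = (ID H \<otimes> ob) \<cdot> rH" using slide2[of rH K H ob U K] h by (simp add: homI)
    have "(rH \<otimes> ob) \<cdot> ob = (ID H \<otimes> ob) \<cdot> (rH \<cdot> ob)" unfolding s2 using h H K by simp
    then show ?thesis using merge_ctx[of "ID K" rH ob "ID K" ob] h Y H K by simp
  qed
  also have "\<dots> = (ID H \<otimes> e) \<cdot> ((ID (H \<odot> H) \<otimes> ob) \<cdot> (CP H \<cdot> (rH \<cdot> ob)))"
    using merge_ctx[of "ID H" "CP H" ob "ID K" "rH \<cdot> ob"] slide2[OF T_cp[OF H] ob] h Y H K by simp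
  also have "\<dots> = (ID H \<otimes> (e \<cdot> (ID H \<otimes> ob))) \<cdot> (CP H \<cdot> (rH \<cdot> ob))"
    using ctx[OF idsplit[of H H ob e]] h Y H K by simp
  also have "\<dots> = pair C H (ID H) (e \<cdot> (ID H \<otimes> ob)) \<cdot> margR C Y H (r \<cdot> ob)"
    unfolding pair_def m2 using h Y H K by simp
  finally have main: "SW Y H \<cdot> (r \<cdot> ob) = pair C H (ID H) (e \<cdot> (ID H \<otimes> ob)) \<cdot> margR C Y H (r \<cdot> ob)" .
  have "e \<cdot> (ID H \<otimes> ob) \<in> HM H Y" using h H K by (intro homI) simp_all
  then show ?thesis unfolding condR_state[OF Y H rot] using main by simp
qed

lemma comp_succ: assumes ps: "precise_supports C" and X: "X \<in> OB" and Y: "Y \<in> OB" and H: "H \<in> OB" and K: "K \<in> OB"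
  and p: "p \<in> HM U (X \<odot> K)" and f: "f \<in> HM X (Y \<odot> H)" and c: "is_condR C U X K p c"
  and dob: "deterministic C U K ob" and dv: "deterministic C U H v"
  shows "abs_cont C (H \<odot> K) (v \<otimes> ob) (margR C Y (H \<odot> K) ((f \<otimes> ID K) \<cdot> p))
     \<longleftrightarrow> abs_cont C K ob (margR C X K p) \<and> abs_cont C H v (margR C Y H (f \<cdot> (c \<cdot> ob)))"
proof -
  note sc = state_from_cond[OF X K p c]
  note cm = comp_marg[OF X Y H K p f c]
  have ob: "ob \<in> HM U K" and v: "v \<in> HM U H" using det_state dob dv by auto
  have rt: "f \<cdot> c \<in> HM K (Y \<odot> H)" using sc f by auto
  have mt: "margR C Y H (f \<cdot> c) \<in> HM K H" unfolding margR_def using hom_dc[OF rt] Y H by (intro homI) simp_all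
  have vo: "v \<otimes> ob \<in> HM U (H \<odot> K)" using v ob T_tm[OF v ob] by simp
  have Mt: "margR C Y (H \<odot> K) ((f \<otimes> ID K) \<cdot> p) \<in> HM U (H \<odot> K)"
    unfolding margR_def using hom_dc[OF f] hom_dc[OF p] X Y H K by (intro homI) simp_all
  have sw: "SW H K \<cdot> (v \<otimes> ob) = ob \<otimes> v" using swnat'[of v ob H K] hom_dc[OF v] hom_dc[OF ob] by simp
  have "abs_cont C (H \<odot> K) (v \<otimes> ob) (margR C Y (H \<odot> K) ((f \<otimes> ID K) \<cdot> p))
     \<longleftrightarrow> abs_cont C (K \<odot> H) (ob \<otimes> v) (pair C K (ID K) (margR C Y H (f \<cdot> c)) \<cdot> margR C X K p)"
    using transport_sw[OF H K vo Mt] sw cm(3) by simp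
  also have "\<dots> \<longleftrightarrow> abs_cont C K ob (margR C X K p) \<and> abs_cont C H v (margR C Y H (f \<cdot> c) \<cdot> ob)"
    using ps[unfolded precise_supports_def] K H dob dv mt sc(3) by blast
  also have "margR C Y H (f \<cdot> c) \<cdot> ob = margR C Y H (f \<cdot> (c \<cdot> ob))"
    unfolding margR_def using hom_dc[OF f] hom_dc[OF sc(2)] hom_dc[OF ob] Y H by simp
  finally show ?thesis .
qed

end

context MC begin

lemma cond_ex: assumes "has_conditionals C" "A \<in> OB" "X \<in> OB" "Y \<in> OB" "f \<in> HM A (X \<odot> Y)"
  shows "\<exists>c. is_condR C A X Y f c"
  using assms unfolding has_conditionals_def by blast

lemma sim_succ: assumes hc: "has_conditionals C" and X: "X \<in> OB" and K: "K \<in> OB"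
  and p: "p \<in> HM U (X \<odot> K)" and ob: "ob \<in> HM U K"
  and s: "abs_cont C K ob (margR C X K p)" and c: "is_condR C U X K p c"
  shows "\<forall>c'. is_condR C U X K p c' \<longrightarrow> c' \<cdot> ob = c \<cdot> ob"
  using uniq[OF X K p _ c s ob] by blast

lemma functorial: assumes hc: "has_conditionals C" and ps: "precise_supports C"
  and X: "X \<in> OB" and Y: "Y \<in> OB" and H: "H \<in> OB" and K: "K \<in> OB" and K': "K' \<in> OB"
  and p: "p \<in> HM U (X \<odot> K)" and dob: "deterministic C U K ob"
  and p': "p' \<in> HM U (X \<odot> K')" and dob': "deterministic C U K' ob'"
  and f: "f \<in> HM X (Y \<odot> H)" and dv: "deterministic C U H v"
  and sim: "obs_sim C X (K, p, ob) (K', p', ob')"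
  shows "obs_sim C Y (H \<odot> K, (f \<otimes> ID K) \<cdot> p, v \<otimes> ob) (H \<odot> K', (f \<otimes> ID K') \<cdot> p', v \<otimes> ob')"
proof -
  obtain c where c: "is_condR C U X K p c" using cond_ex[OF hc O_U X K p] by blast
  obtain c' where c': "is_condR C U X K' p' c'" using cond_ex[OF hc O_U X K' p'] by blast
  note sc = state_from_cond[OF X K p c]
  note sc' = state_from_cond[OF X K' p' c']
  have ob: "ob \<in> HM U K" and v: "v \<in> HM U H" and ob': "ob' \<in> HM U K'"
    and dob2: "CP K \<cdot> ob = ob \<otimes> ob" and dob2': "CP K' \<cdot> ob' = ob' \<otimes> ob'"
    using det_state dob dv dob' by auto
  have rt: "f \<cdot> c \<in> HM K (Y \<odot> H)" using sc f by auto
  have rt': "f \<cdot> c' \<in> HM K' (Y \<odot> H)" using sc' f by auto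
  obtain e where e: "is_condR C K Y H (f \<cdot> c) e" using cond_ex[OF hc K Y H rt] by blast
  obtain e' where e': "is_condR C K' Y H (f \<cdot> c') e'" using cond_ex[OF hc K' Y H rt'] by blast
  note cs = comp_succ[OF ps X Y H K p f c dob dv]
  note cs' = comp_succ[OF ps X Y H K' p' f c' dob' dv]
  have Pt: "(f \<otimes> ID K) \<cdot> p \<in> HM U (Y \<odot> H \<odot> K)" using hom_dc[OF f] hom_dc[OF p] X Y H K by (intro homI) simp_all
  have Pt': "(f \<otimes> ID K') \<cdot> p' \<in> HM U (Y \<odot> H \<odot> K')" using hom_dc[OF f] hom_dc[OF p'] X Y H K' by (intro homI) simp_all
  have vo: "v \<otimes> ob \<in> HM U (H \<odot> K)" using T_tm[OF v ob] by simp
  have vo': "v \<otimes> ob' \<in> HM U (H \<odot> K')" using T_tm[OF v ob'] by simp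
  have HK: "H \<odot> K \<in> OB" "H \<odot> K' \<in> OB" using H K K' by auto
  have cc: "is_condR C U Y (H \<odot> K) ((f \<otimes> ID K) \<cdot> p) e" by (rule comp_cond[OF X Y H K p f c e])
  have cc': "is_condR C U Y (H \<odot> K') ((f \<otimes> ID K') \<cdot> p') e'" by (rule comp_cond[OF X Y H K' p' f c' e'])
  have ca: "is_condR C U Y H (f \<cdot> (c \<cdot> ob)) (e \<cdot> (ID H \<otimes> ob))"
    using cond_at[OF Y H K rt e ob dob2] hom_dc[OF f] hom_dc[OF sc(2)] hom_dc[OF ob] X K by simp
  have ca': "is_condR C U Y H (f \<cdot> (c' \<cdot> ob')) (e' \<cdot> (ID H \<otimes> ob'))"
    using cond_at[OF Y H K' rt' e' ob' dob2'] hom_dc[OF f] hom_dc[OF sc'(2)] hom_dc[OF ob'] X K' by simp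
  have et: "e \<in> HM (H \<odot> K) Y" using e condR_param[OF K Y H rt] by auto
  have et': "e' \<in> HM (H \<odot> K') Y" using e' condR_param[OF K' Y H rt'] by auto
  have ev: "e \<cdot> (v \<otimes> ob) = (e \<cdot> (ID H \<otimes> ob)) \<cdot> v"
    using stateL[OF v ob] hom_dc[OF v] hom_dc[OF ob] hom_dc[OF et] H K by simp
  have ev': "e' \<cdot> (v \<otimes> ob') = (e' \<cdot> (ID H \<otimes> ob')) \<cdot> v"
    using stateL[OF v ob'] hom_dc[OF v] hom_dc[OF ob'] hom_dc[OF et'] H K' by simp
  let ?S = "abs_cont C K ob (margR C X K p)"
  let ?S' = "abs_cont C K' ob' (margR C X K' p')"
  let ?SC = "abs_cont C (H \<odot> K) (v \<otimes> ob) (margR C Y (H \<odot> K) ((f \<otimes> ID K) \<cdot> p))"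
  let ?SC' = "abs_cont C (H \<odot> K') (v \<otimes> ob') (margR C Y (H \<odot> K') ((f \<otimes> ID K') \<cdot> p'))"
  have simD: "(?S \<and> ?S' \<and> c \<cdot> ob = c' \<cdot> ob') \<or> (\<not> ?S \<and> \<not> ?S')"
    using sim c c' unfolding obs_sim_def succeeds_def by auto
  have goal: "(?SC \<and> ?SC' \<and> (\<forall>d d'. is_condR C U Y (H \<odot> K) ((f \<otimes> ID K) \<cdot> p) d \<longrightarrow>
       is_condR C U Y (H \<odot> K') ((f \<otimes> ID K') \<cdot> p') d' \<longrightarrow> d \<cdot> (v \<otimes> ob) = d' \<cdot> (v \<otimes> ob'))) \<or> (\<not> ?SC \<and> \<not> ?SC')"
  proof (cases "?S \<and> ?S' \<and> c \<cdot> ob = c' \<cdot> ob'")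
    case True
    then have eq: "c \<cdot> ob = c' \<cdot> ob'" and S: ?S and S': ?S' by auto
    show ?thesis
    proof (cases "abs_cont C H v (margR C Y H (f \<cdot> (c \<cdot> ob)))")
      case T: True
      have SC: ?SC using cs S T by simp
      have SC': ?SC' using cs' S' T eq by simp
      have st: "f \<cdot> (c \<cdot> ob) \<in> HM U (Y \<odot> H)" using f sc(2) ob by auto
      have key: "(e \<cdot> (ID H \<otimes> ob)) \<cdot> v = (e' \<cdot> (ID H \<otimes> ob')) \<cdot> v"
        using uniq[OF Y H st ca _ T v] ca' eq by simp
      show ?thesis
      proof (intro disjI1 conjI allI impI SC SC')
        fix d d' assume d: "is_condR C U Y (H \<odot> K) ((f \<otimes> ID K) \<cdot> p) d"
          and d': "is_condR C U Y (H \<odot> K') ((f \<otimes> ID K') \<cdot> p') d'"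
        have "d \<cdot> (v \<otimes> ob) = e \<cdot> (v \<otimes> ob)" by (rule uniq[OF Y HK(1) Pt d cc SC vo])
        also have "\<dots> = e' \<cdot> (v \<otimes> ob')" using ev ev' key by simp
        also have "\<dots> = d' \<cdot> (v \<otimes> ob')" by (rule uniq[OF Y HK(2) Pt' cc' d' SC' vo'])
        finally show "d \<cdot> (v \<otimes> ob) = d' \<cdot> (v \<otimes> ob')" .
      qed
    next
      case F: False
      have "\<not> ?SC" using cs F by simp
      moreover have "\<not> ?SC'" using cs' F eq by simp
      ultimately show ?thesis by simp
    qed
  next
    case False
    then have "\<not> ?S" "\<not> ?S'" using simD by auto
    then show ?thesis using cs cs' by simp
  qed
  then show ?thesis unfolding obs_sim_def succeeds_def by simp
qed

end

context MC begin

lemma sim_simp: "obs_sim C X (K, q, ob) (K', q', ob') \<longleftrightarrow>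
   (abs_cont C K ob (margR C X K q) \<and> abs_cont C K' ob' (margR C X K' q') \<and>
     (\<forall>c c'. is_condR C U X K q c \<longrightarrow> is_condR C U X K' q' c' \<longrightarrow> c \<cdot> ob = c' \<cdot> ob'))
   \<or> (\<not> abs_cont C K ob (margR C X K q) \<and> \<not> abs_cont C K' ob' (margR C X K' q'))"
  unfolding obs_sim_def succeeds_def by simp

lemma sim_refl: assumes X: "X \<in> OB" and p: "p \<in> obs_hom C U X" shows "obs_sim C X p p"
proof -
  obtain K q ob where pe: "p = (K, q, ob)" by (cases p) auto
  have K: "K \<in> OB" and q: "q \<in> HM U (X \<odot> K)" and ob: "ob \<in> HM U K"
    using p unfolding pe obs_hom_def deterministic_def by auto
  show ?thesis unfolding pe sim_simp
    using uniq[OF X K q _ _ _ ob] by auto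
qed

lemma sim_sym: assumes "obs_sim C X p q" shows "obs_sim C X q p"
proof -
  obtain K1 q1 o1 where pe: "p = (K1, q1, o1)" by (cases p) auto
  obtain K2 q2 o2 where qe: "q = (K2, q2, o2)" by (cases q) auto
  show ?thesis using assms unfolding pe qe sim_simp by (metis (no_types, lifting))
qed

lemma sim_trans: assumes hc: "has_conditionals C" and X: "X \<in> OB"
  and p: "p \<in> obs_hom C U X" and q: "q \<in> obs_hom C U X" and r: "r \<in> obs_hom C U X"
  and pq: "obs_sim C X p q" and qr: "obs_sim C X q r"
  shows "obs_sim C X p r"
proof -
  obtain K1 q1 o1 where pe: "p = (K1, q1, o1)" by (cases p) auto
  obtain K2 q2 o2 where qe: "q = (K2, q2, o2)" by (cases q) auto
  obtain K3 q3 o3 where re: "r = (K3, q3, o3)" by (cases r) auto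
  have K2: "K2 \<in> OB" and q2: "q2 \<in> HM U (X \<odot> K2)"
    using q unfolding qe obs_hom_def deterministic_def by auto
  obtain c2 where c2: "is_condR C U X K2 q2 c2" using cond_ex[OF hc O_U X K2 q2] by blast
  have A: "(abs_cont C K1 o1 (margR C X K1 q1) \<and> abs_cont C K2 o2 (margR C X K2 q2) \<and>
     (\<forall>c c'. is_condR C U X K1 q1 c \<longrightarrow> is_condR C U X K2 q2 c' \<longrightarrow> c \<cdot> o1 = c' \<cdot> o2))
   \<or> (\<not> abs_cont C K1 o1 (margR C X K1 q1) \<and> \<not> abs_cont C K2 o2 (margR C X K2 q2))"
    using pq unfolding pe qe sim_simp .
  have B: "(abs_cont C K2 o2 (margR C X K2 q2) \<and> abs_cont C K3 o3 (margR C X K3 q3) \<and>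
     (\<forall>c c'. is_condR C U X K2 q2 c \<longrightarrow> is_condR C U X K3 q3 c' \<longrightarrow> c \<cdot> o2 = c' \<cdot> o3))
   \<or> (\<not> abs_cont C K2 o2 (margR C X K2 q2) \<and> \<not> abs_cont C K3 o3 (margR C X K3 q3))"
    using qr unfolding qe re sim_simp .
  show ?thesis unfolding pe re sim_simp
  proof (cases "abs_cont C K2 o2 (margR C X K2 q2)")
    case True
    then show "(abs_cont C K1 o1 (margR C X K1 q1) \<and> abs_cont C K3 o3 (margR C X K3 q3) \<and>
     (\<forall>c c'. is_condR C U X K1 q1 c \<longrightarrow> is_condR C U X K3 q3 c' \<longrightarrow> c \<cdot> o1 = c' \<cdot> o3))
   \<or> (\<not> abs_cont C K1 o1 (margR C X K1 q1) \<and> \<not> abs_cont C K3 o3 (margR C X K3 q3))"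
      using A B c2 by metis
  next
    case False
    then show "(abs_cont C K1 o1 (margR C X K1 q1) \<and> abs_cont C K3 o3 (margR C X K3 q3) \<and>
     (\<forall>c c'. is_condR C U X K1 q1 c \<longrightarrow> is_condR C U X K3 q3 c' \<longrightarrow> c \<cdot> o1 = c' \<cdot> o3))
   \<or> (\<not> abs_cont C K1 o1 (margR C X K1 q1) \<and> \<not> abs_cont C K3 o3 (margR C X K3 q3))"
      using A B by blast
  qed
qed

end

theorem theorem5p7_aux:
  fixes C :: "('o, 'm) mcat"
  assumes "markov_cat C" and "has_conditionals C" and "precise_supports C"
  shows "\<forall>X\<in>Ob C.
      (\<forall>p\<in>obs_hom C (unt C) X. obs_sim C X p p) \<and>
      (\<forall>p\<in>obs_hom C (unt C) X. \<forall>q\<in>obs_hom C (unt C) X. obs_sim C X p q \<longrightarrow> obs_sim C X q p) \<and>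
      (\<forall>p\<in>obs_hom C (unt C) X. \<forall>q\<in>obs_hom C (unt C) X. \<forall>r\<in>obs_hom C (unt C) X.
          obs_sim C X p q \<longrightarrow> obs_sim C X q r \<longrightarrow> obs_sim C X p r) \<and>
      (\<forall>Y\<in>Ob C. \<forall>p\<in>obs_hom C (unt C) X. \<forall>q\<in>obs_hom C (unt C) X. \<forall>h\<in>obs_hom C X Y.
          obs_sim C X p q \<longrightarrow> obs_sim C Y (obs_comp C Y h p) (obs_comp C Y h q))"
proof -
  interpret MC C by unfold_locales (rule assms(1))
  show ?thesis
  proof (intro ballI conjI impI)
    fix X assume X: "X \<in> Ob C"
    show "\<And>p. p \<in> obs_hom C (unt C) X \<Longrightarrow> obs_sim C X p p" using sim_refl[OF X] by blast
    show "\<And>p q. obs_sim C X p q \<Longrightarrow> obs_sim C X q p" by (rule sim_sym)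
    show "\<And>p q r. p \<in> obs_hom C (unt C) X \<Longrightarrow> q \<in> obs_hom C (unt C) X \<Longrightarrow> r \<in> obs_hom C (unt C) X \<Longrightarrow>
        obs_sim C X p q \<Longrightarrow> obs_sim C X q r \<Longrightarrow> obs_sim C X p r"
      using sim_trans[OF assms(2) X] by blast
    fix Y p q h assume Y: "Y \<in> Ob C" and p: "p \<in> obs_hom C (unt C) X" and q: "q \<in> obs_hom C (unt C) X"
      and h: "h \<in> obs_hom C X Y" and pq: "obs_sim C X p q"
    obtain K1 q1 o1 where pe: "p = (K1, q1, o1)" by (cases p) auto
    obtain K2 q2 o2 where qe: "q = (K2, q2, o2)" by (cases q) auto
    obtain H f v where he: "h = (H, f, v)" by (cases h) auto
    have a: "K1 \<in> Ob C" "q1 \<in> Hom C (unt C) (tob C X K1)" "deterministic C (unt C) K1 o1"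
      using p unfolding pe obs_hom_def by auto
    have b: "K2 \<in> Ob C" "q2 \<in> Hom C (unt C) (tob C X K2)" "deterministic C (unt C) K2 o2"
      using q unfolding qe obs_hom_def by auto
    have c: "H \<in> Ob C" "f \<in> Hom C X (tob C Y H)" "deterministic C (unt C) H v"
      using h unfolding he obs_hom_def by auto
    show "obs_sim C Y (obs_comp C Y h p) (obs_comp C Y h q)"
      unfolding pe qe he obs_comp_def
      using functorial[OF assms(2,3) X Y c(1) a(1) b(1) a(2) a(3) b(2) b(3) c(2) c(3)] pq[unfolded pe qe]
      by simp
  qed
qed


theorem theorem5p7:
  fixes C :: "('o, 'm) mcat"
  assumes "markov_cat C" and "has_conditionals C" and "precise_supports C"
  shows "\<forall>X\<in>Ob C.
      (\<forall>p\<in>obs_hom C (unt C) X. obs_sim C X p p) \<and>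
      (\<forall>p\<in>obs_hom C (unt C) X. \<forall>q\<in>obs_hom C (unt C) X. obs_sim C X p q \<longrightarrow> obs_sim C X q p) \<and>
      (\<forall>p\<in>obs_hom C (unt C) X. \<forall>q\<in>obs_hom C (unt C) X. \<forall>r\<in>obs_hom C (unt C) X.
          obs_sim C X p q \<longrightarrow> obs_sim C X q r \<longrightarrow> obs_sim C X p r) \<and>
      (\<forall>Y\<in>Ob C. \<forall>p\<in>obs_hom C (unt C) X. \<forall>q\<in>obs_hom C (unt C) X. \<forall>h\<in>obs_hom C X Y.
          obs_sim C X p q \<longrightarrow> obs_sim C Y (obs_comp C Y h p) (obs_comp C Y h q))"
  by (rule theorem5p7_aux[OF assms])

end
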